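(* Let $F$ be an infinite field of characteristic $p>2$ and $k$ a positive integer. Let $l_1,\dots,l_k\in\mathbb{N}_0$ and let $x^i_1,\dots,x^i_{l_i}$ ($i=1,\dots,k$) be distinct variables, $x^i_t$ of degree $i$. Consider the graded monomial $T=(x^1_1)^{r^1_1}\cdots(x^1_{l_1})^{r^1_{l_1}}\cdots(x^k_1)^{r^k_1}\cdots(x^k_{l_k})^{r^k_{l_k}}$ with non-negative integer exponents satisfying $\sum_{i=1}^k i\,(r^i_1+\cdots+r^i_{l_i})\le k$. Let $r=\max\{r^i_t\}$ and suppose $p>r$. Then $T$ is not a $\mathbb{Z}$-graded identity of $E^{k^\ast}$.
   Context: $L$ is a vector space over $F$ with basis $e_1,e_2,\dots$, $E$ its unital Grassmann algebra (basis $1$ and $e_{i_1}\cdots e_{i_k}$, $i_1<\cdots<i_k$, with $e_ie_j=-e_je_i$). $E^{k^\ast}$ is $E$ with the $\mathbb{Z}$-grading induced by $\|e_i\|=1$ for $i\le k$, $\|e_i\|=0$ for $i>k$ (basis monomials get the sum of degrees of their factors; $1$ has degree $0$). A graded polynomial is a graded identity of $A$ if it vanishes whenever each variable is replaced by an element of the homogeneous component of $A$ of that variable's degree. *)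

theory Defs
  imports Main
begin

text \<open>An element is a coefficient function on finite sets S of positive
naturals (S stands for the basis monomial e_(i1)...e_(im), i1 < ... < im), with finite support.\<close>

definition grassmann_elem :: "(nat set \<Rightarrow> 'a::field) \<Rightarrow> bool" where
  "grassmann_elem f \<longleftrightarrow> finite {S. f S \<noteq> 0} \<and>
     (\<forall>S. f S \<noteq> 0 \<longrightarrow> finite S \<and> 0 \<notin> S)"

text \<open>Sign with e_S e_T = sign S T e_(S \<union> T) for disjoint S, T.\<close>
definition gsign :: "nat set \<Rightarrow> nat set \<Rightarrow> 'a::field" where
  "gsign S T = (- 1) ^ card {(i, j). i \<in> S \<and> j \<in> T \<and> j < i}"

definition gmult :: "(nat set \<Rightarrow> 'a::field) \<Rightarrow> (nat set \<Rightarrow> 'a) \<Rightarrow> (nat set \<Rightarrow> 'a)" where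
  "gmult f g U = (if finite U then (\<Sum>S\<in>Pow U. gsign S (U - S) * f S * g (U - S)) else 0)"

definition gone :: "nat set \<Rightarrow> 'a::field" where
  "gone S = (if S = {} then 1 else 0)"

primrec gpow :: "(nat set \<Rightarrow> 'a::field) \<Rightarrow> nat \<Rightarrow> (nat set \<Rightarrow> 'a)" where
  "gpow f 0 = gone"
| "gpow f (Suc n) = gmult f (gpow f n)"

text \<open>Homogeneous component of degree d of E^{k*}: the grading has ||e_i|| = 1 for i \<le> k and
0 for i > k, so the basis monomial e_S has degree card (S \<inter> {1..k}).\<close>
definition gcomp :: "nat \<Rightarrow> int \<Rightarrow> (nat set \<Rightarrow> 'a::field) set" where
  "gcomp k d = {f. grassmann_elem f \<and> (\<forall>S. f S \<noteq> 0 \<longrightarrow> int (card (S \<inter> {1..k})) = d)}"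

definition mon_vars :: "nat \<Rightarrow> (nat \<Rightarrow> nat) \<Rightarrow> (nat \<times> nat) list" where
  "mon_vars k l = concat (map (\<lambda>i. map (\<lambda>t. (i, t)) [1..<Suc (l i)]) [1..<Suc k])"

definition eval_mon :: "nat \<Rightarrow> (nat \<Rightarrow> nat) \<Rightarrow> (nat \<Rightarrow> nat \<Rightarrow> nat)
    \<Rightarrow> (nat \<Rightarrow> nat \<Rightarrow> (nat set \<Rightarrow> 'a::field)) \<Rightarrow> (nat set \<Rightarrow> 'a)" where
  "eval_mon k l r \<phi> = foldr (\<lambda>(i, t) acc. gmult (gpow (\<phi> i t) (r i t)) acc) (mon_vars k l) gone"

definition graded_identity_mon :: "'a::field itself \<Rightarrow> nat \<Rightarrow> (nat \<Rightarrow> nat) \<Rightarrow> (nat \<Rightarrow> nat \<Rightarrow> nat) \<Rightarrow> bool" where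
  "graded_identity_mon _ k l r \<longleftrightarrow>
     (\<forall>\<phi> :: nat \<Rightarrow> nat \<Rightarrow> (nat set \<Rightarrow> 'a::field).
        (\<forall>i\<in>{1..k}. \<forall>t\<in>{1..l i}. \<phi> i t \<in> gcomp k (int i)) \<longrightarrow> eval_mon k l r \<phi> = (\<lambda>_. 0))"

end

theory Submission
  imports Defs
begin


definition off :: "(nat \<Rightarrow> nat) \<Rightarrow> nat \<Rightarrow> nat" where "off d b = (\<Sum>c<b. d c)"
definition qset :: "(nat \<Rightarrow> nat) \<Rightarrow> nat \<Rightarrow> nat \<Rightarrow> nat \<Rightarrow> nat set" where
  "qset d k N b = (if odd (d b) then {k + N + 1 - b} else {})"
definition pset :: "(nat \<Rightarrow> nat) \<Rightarrow> nat \<Rightarrow> nat set" where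
  "pset d b = {off d b + 1 .. off d b + d b}"
definition blk :: "(nat \<Rightarrow> nat) \<Rightarrow> nat \<Rightarrow> nat \<Rightarrow> nat \<Rightarrow> nat set" where
  "blk d k N b = pset d b \<union> qset d k N b"

definition good :: "(nat \<Rightarrow> nat) \<Rightarrow> nat \<Rightarrow> nat \<Rightarrow> bool" where
  "good d k N \<longleftrightarrow> (\<forall>b<N. d b \<ge> 1) \<and> (\<Sum>b<N. d b) \<le> k"

lemma off_le: "b < N \<Longrightarrow> off d b + d b \<le> (\<Sum>c<N. d c)"
proof -
  assume "b < N"
  have "off d b + d b = (\<Sum>c<Suc b. d c)" by (simp add: off_def)
  also have "\<dots> \<le> (\<Sum>c<N. d c)" using \<open>b < N\<close> by (intro sum_mono2) auto
  finally show ?thesis .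
qed

lemma off_mono: "a < b \<Longrightarrow> off d a + d a \<le> off d b"
proof -
  assume "a < b"
  have "off d a + d a = (\<Sum>c<Suc a. d c)" by (simp add: off_def)
  also have "\<dots> \<le> (\<Sum>c<b. d c)" using \<open>a < b\<close> by (intro sum_mono2) auto
  finally show ?thesis by (simp add: off_def)
qed

lemma pset_le: "good d k N \<Longrightarrow> b < N \<Longrightarrow> x \<in> pset d b \<Longrightarrow> 1 \<le> x \<and> x \<le> k"
  using off_le[of b N d] by (auto simp: good_def pset_def)

lemma qset_gt: "b < N \<Longrightarrow> x \<in> qset d k N b \<Longrightarrow> x > k + 1"
  by (auto simp: qset_def split: if_splits)

lemma card_qset: "b < N \<Longrightarrow> card (qset d k N b) = (if odd (d b) then 1 else 0)"
  by (simp add: qset_def)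

lemma card_blk: "good d k N \<Longrightarrow> b < N \<Longrightarrow> card (blk d k N b) = d b + (if odd (d b) then 1 else 0)"
proof -
  assume g: "good d k N" and b: "b < N"
  have "pset d b \<inter> qset d k N b = {}" using pset_le[OF g b] qset_gt[OF b] by fastforce
  then have "card (blk d k N b) = card (pset d b) + card (qset d k N b)"
    unfolding blk_def by (intro card_Un_disjoint) (auto simp: pset_def qset_def)
  then show ?thesis using card_qset[OF b] by (simp add: pset_def)
qed

lemma even_card_blk: "good d k N \<Longrightarrow> b < N \<Longrightarrow> even (card (blk d k N b))"
  by (simp add: card_blk)

lemma finite_blk: "finite (blk d k N b)"
  by (simp add: blk_def pset_def qset_def)

lemma cnt_gt: 
  assumes g: "good d k N" and a: "a < N" and b: "b < N" and ab: "b < a" and y: "y \<in> blk d k N b"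
  shows "even (card {x \<in> blk d k N a. y < x})"
proof (cases "y \<in> pset d b")
  case True
  have "{x \<in> blk d k N a. y < x} = blk d k N a"
    using True off_mono[OF ab, of d] pset_le[OF g b True]
    by (auto simp: blk_def pset_def dest: qset_gt[OF a, where d=d and k=k])
  then show ?thesis using even_card_blk[OF g a] by simp
next
  case False
  then have "y = k + N + 1 - b" using y by (auto simp: blk_def qset_def split: if_splits)
  then have "{x \<in> blk d k N a. y < x} = {}"
    using ab a b by (auto simp: blk_def qset_def dest: pset_le[OF g a])
  then show ?thesis by (simp only:) simp
qed

lemma cnt_lt: 
  assumes g: "good d k N" and a: "a < N" and b: "b < N" and ab: "a < b" and y: "y \<in> blk d k N b"
  shows "{x \<in> blk d k N a. y < x} = qset d k N a"
proof (cases "y \<in> pset d b")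
  case True
  show ?thesis
    using True off_mono[OF ab, of d] pset_le[OF g b True] pset_le[OF g a]
    by (auto simp: blk_def pset_def dest: qset_gt[OF a, where d=d and k=k])
next
  case False
  then have "y = k + N + 1 - b" using y by (auto simp: blk_def qset_def split: if_splits)
  then show ?thesis
    using ab a b by (auto simp: blk_def qset_def dest: pset_le[OF g a])
qed

definition prs :: "nat set \<Rightarrow> nat set \<Rightarrow> (nat \<times> nat) set" where
  "prs S T = {(i, j). i \<in> S \<and> j \<in> T \<and> j < i}"

lemma card_prs: "finite S \<Longrightarrow> finite T \<Longrightarrow> card (prs S T) = (\<Sum>y\<in>T. card {x \<in> S. y < x})"
proof -
  assume f: "finite S" "finite T"
  have "prs S T = (\<lambda>(y, x). (x, y)) ` (SIGMA y:T. {x \<in> S. y < x})"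
    by (auto simp: prs_def image_iff)
  moreover have "inj_on (\<lambda>(y, x). (x, y)) (SIGMA y:T. {x \<in> S. y < x})"
    by (auto simp: inj_on_def)
  ultimately have "card (prs S T) = card (SIGMA y:T. {x \<in> S. y < x})"
    by (simp add: card_image)
  also have "\<dots> = (\<Sum>y\<in>T. card {x \<in> S. y < x})" using f by simp
  finally show ?thesis .
qed

lemma even_prs_blk:
  assumes g: "good d k N" and a: "a < N" and b: "b < N" and ab: "a \<noteq> b"
  shows "even (card (prs (blk d k N a) (blk d k N b)))"
proof -
  have c: "card (prs (blk d k N a) (blk d k N b)) = (\<Sum>y\<in>blk d k N b. card {x \<in> blk d k N a. y < x})"
    by (simp add: card_prs finite_blk)
  show ?thesis
  proof (cases "b < a")
    case True
    then show ?thesis unfolding c using cnt_gt[OF g a b True] by (intro dvd_sum) auto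
  next
    case False
    then have "a < b" using ab by simp
    then have "(\<Sum>y\<in>blk d k N b. card {x \<in> blk d k N a. y < x}) = card (blk d k N b) * card (qset d k N a)"
      using cnt_lt[OF g a b] by simp
    then show ?thesis unfolding c using even_card_blk[OF g b] by simp
  qed
qed




definition blks :: "(nat \<Rightarrow> nat) \<Rightarrow> nat \<Rightarrow> nat \<Rightarrow> nat set \<Rightarrow> nat set" where
  "blks d k N J = \<Union> (blk d k N ` J)"

definition gM :: "(nat \<Rightarrow> nat) \<Rightarrow> nat \<Rightarrow> nat \<Rightarrow> nat set \<Rightarrow> nat set \<Rightarrow> 'a::field" where
  "gM d k N J = (\<lambda>U. if U = blks d k N J then 1 else 0)"

lemma blk_disj:
  assumes g: "good d k N" and a: "a < N" and b: "b < N" and ab: "a \<noteq> b"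
  shows "blk d k N a \<inter> blk d k N b = {}"
proof -
  have pp: "pset d a \<inter> pset d b = {}"
  proof (cases "a < b")
    case True then show ?thesis using off_mono[OF True, of d] by (auto simp: pset_def)
  next
    case False then have "b < a" using ab by simp
    then show ?thesis using off_mono[of b a d] by (auto simp: pset_def)
  qed
  have qq: "qset d k N a \<inter> qset d k N b = {}" using a b ab by (auto simp: qset_def)
  have pq1: "pset d a \<inter> qset d k N b = {}"
    using pset_le[OF g a] qset_gt[OF b, where d=d and k=k] by fastforce
  have pq2: "qset d k N a \<inter> pset d b = {}"
    using pset_le[OF g b] qset_gt[OF a, where d=d and k=k] by fastforce
  show ?thesis using pp qq pq1 pq2 unfolding blk_def by blast
qed

lemma blk_ne: "good d k N \<Longrightarrow> b < N \<Longrightarrow> off d b + 1 \<in> blk d k N b"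
  by (auto simp: good_def blk_def pset_def)

lemma finite_blks: "finite J \<Longrightarrow> finite (blks d k N J)"
  by (simp add: blks_def finite_blk)

lemma gsign_blks:
  assumes g: "good d k N" and J1: "J1 \<subseteq> {..<N}" and J2: "J2 \<subseteq> {..<N}" and dj: "J1 \<inter> J2 = {}"
  shows "gsign (blks d k N J1) (blks d k N J2) = (1::'a::field)"
proof -
  have fin: "finite (J1 \<times> J2)" using J1 J2 finite_subset by blast
  have e: "prs (blks d k N J1) (blks d k N J2) = (\<Union>p\<in>J1 \<times> J2. prs (blk d k N (fst p)) (blk d k N (snd p)))"
    by (auto simp: prs_def blks_def)
  have "card (prs (blks d k N J1) (blks d k N J2)) = (\<Sum>p\<in>J1 \<times> J2. card (prs (blk d k N (fst p)) (blk d k N (snd p))))"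
    unfolding e
  proof (rule card_UN_disjoint[OF fin])
    show "\<forall>i\<in>J1 \<times> J2. finite (prs (blk d k N (fst i)) (blk d k N (snd i)))"
    proof
      fix i
      have "prs (blk d k N (fst i)) (blk d k N (snd i)) \<subseteq> blk d k N (fst i) \<times> blk d k N (snd i)"
        by (auto simp: prs_def)
      then show "finite (prs (blk d k N (fst i)) (blk d k N (snd i)))"
        by (rule finite_subset) (simp add: finite_blk)
    qed
    show "\<forall>i\<in>J1 \<times> J2. \<forall>j\<in>J1 \<times> J2. i \<noteq> j \<longrightarrow>
      prs (blk d k N (fst i)) (blk d k N (snd i)) \<inter> prs (blk d k N (fst j)) (blk d k N (snd j)) = {}"
    proof (intro ballI impI)
      fix i j assume i: "i \<in> J1 \<times> J2" and j: "j \<in> J1 \<times> J2" and ij: "i \<noteq> j"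
      obtain a b where ab: "i = (a, b)" by (cases i)
      obtain a' b' where ab': "j = (a', b')" by (cases j)
      have lt: "a < N" "b < N" "a' < N" "b' < N" using i j ab ab' J1 J2 by auto
      have "a \<noteq> a' \<or> b \<noteq> b'" using ij ab ab' by simp
      then have "blk d k N a \<inter> blk d k N a' = {} \<or> blk d k N b \<inter> blk d k N b' = {}"
        using blk_disj[OF g] lt by blast
      then have "prs (blk d k N a) (blk d k N b) \<inter> prs (blk d k N a') (blk d k N b') = {}"
        unfolding prs_def by blast
      then show "prs (blk d k N (fst i)) (blk d k N (snd i)) \<inter> prs (blk d k N (fst j)) (blk d k N (snd j)) = {}"
        using ab ab' by simp
    qed
  qed
  moreover have "even (\<Sum>p\<in>J1 \<times> J2. card (prs (blk d k N (fst p)) (blk d k N (snd p))))"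
  proof (intro dvd_sum)
    fix p assume p: "p \<in> J1 \<times> J2"
    then have "fst p \<noteq> snd p" using dj by auto
    then show "even (card (prs (blk d k N (fst p)) (blk d k N (snd p))))"
      using p J1 J2 by (intro even_prs_blk[OF g]) auto
  qed
  ultimately have "even (card (prs (blks d k N J1) (blks d k N J2)))" by simp
  then show ?thesis unfolding gsign_def prs_def[symmetric] by simp
qed

lemma gmult_gM:
  assumes g: "good d k N" and J1: "J1 \<subseteq> {..<N}" and J2: "J2 \<subseteq> {..<N}"
  shows "gmult (gM d k N J1) (gM d k N J2) = (if J1 \<inter> J2 = {} then gM d k N (J1 \<union> J2) else (\<lambda>_. (0::'a::field)))"
proof
  fix U
  define B1 where "B1 = blks d k N J1"
  define B2 where "B2 = blks d k N J2"
  have f1: "finite J1" "finite J2" using J1 J2 finite_subset by auto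
  have u: "blks d k N (J1 \<union> J2) = B1 \<union> B2" by (auto simp: B1_def B2_def blks_def)
  have "gmult (gM d k N J1) (gM d k N J2) U =
      (if finite U then (\<Sum>S\<in>Pow U. (if S = B1 then gsign B1 (U - B1) * (if U - B1 = B2 then 1 else 0) else (0::'a))) else 0)"
    unfolding gmult_def gM_def B1_def[symmetric] B2_def[symmetric]
    by (intro if_cong refl sum.cong) auto
  also have "\<dots> = (if finite U \<and> B1 \<subseteq> U \<and> U - B1 = B2 then gsign B1 B2 else 0)"
    by (simp add: sum.delta)
  finally have e: "gmult (gM d k N J1) (gM d k N J2) U = (if finite U \<and> B1 \<subseteq> U \<and> U - B1 = B2 then gsign B1 B2 else (0::'a))" .
  show "gmult (gM d k N J1) (gM d k N J2) U = (if J1 \<inter> J2 = {} then gM d k N (J1 \<union> J2) else (\<lambda>_. (0::'a::field))) U"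
  proof (cases "J1 \<inter> J2 = {}")
    case True
    have dj: "B1 \<inter> B2 = {}"
    proof (rule ccontr)
      assume "B1 \<inter> B2 \<noteq> {}"
      then obtain x a b where "a \<in> J1" "b \<in> J2" "x \<in> blk d k N a" "x \<in> blk d k N b"
        unfolding B1_def B2_def blks_def by blast
      moreover have "a \<noteq> b" using True calculation by blast
      moreover have "a < N" "b < N" using J1 J2 calculation by auto
      ultimately show False using blk_disj[OF g, of a b] by blast
    qed
    have s: "gsign B1 B2 = (1::'a)" unfolding B1_def B2_def using gsign_blks[OF g J1 J2 True] .
    have fb: "finite (B1 \<union> B2)" using f1 unfolding B1_def B2_def by (simp add: finite_blks)
    have "(finite U \<and> B1 \<subseteq> U \<and> U - B1 = B2) \<longleftrightarrow> U = B1 \<union> B2"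
      using dj fb by blast
    then show ?thesis using True e s u by (simp add: gM_def)
  next
    case False
    then obtain c where c: "c \<in> J1" "c \<in> J2" by blast
    then have "c < N" using J1 by auto
    then have "off d c + 1 \<in> B1" "off d c + 1 \<in> B2"
      using blk_ne[OF g] c unfolding B1_def B2_def blks_def by auto
    then have "\<not> (U - B1 = B2)" by blast
    then show ?thesis using e False by simp
  qed
qed

lemma gmult_sum:
  assumes "finite A" "finite B"
  shows "gmult (\<lambda>U. \<Sum>x\<in>A. f x U) (\<lambda>U. \<Sum>y\<in>B. g y U) = (\<lambda>U. \<Sum>x\<in>A. \<Sum>y\<in>B. gmult (f x) (g y) U)"
proof
  fix U
  show "gmult (\<lambda>U. \<Sum>x\<in>A. f x U) (\<lambda>U. \<Sum>y\<in>B. g y U) U = (\<Sum>x\<in>A. \<Sum>y\<in>B. gmult (f x) (g y) U)"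
  proof (cases "finite U")
    case True
    have "gmult (\<lambda>U. \<Sum>x\<in>A. f x U) (\<lambda>U. \<Sum>y\<in>B. g y U) U
       = (\<Sum>S\<in>Pow U. \<Sum>y\<in>B. \<Sum>x\<in>A. gsign S (U - S) * f x S * g y (U - S))"
      using True by (simp add: gmult_def sum_distrib_left sum_distrib_right mult.assoc)
    also have "\<dots> = (\<Sum>S\<in>Pow U. \<Sum>x\<in>A. \<Sum>y\<in>B. gsign S (U - S) * f x S * g y (U - S))"
      by (intro sum.cong refl sum.swap)
    also have "\<dots> = (\<Sum>x\<in>A. \<Sum>S\<in>Pow U. \<Sum>y\<in>B. gsign S (U - S) * f x S * g y (U - S))"
      by (rule sum.swap)
    also have "\<dots> = (\<Sum>x\<in>A. \<Sum>y\<in>B. \<Sum>S\<in>Pow U. gsign S (U - S) * f x S * g y (U - S))"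
      by (intro sum.cong refl sum.swap)
    also have "\<dots> = (\<Sum>x\<in>A. \<Sum>y\<in>B. gmult (f x) (g y) U)"
      using True by (simp add: gmult_def)
    finally show ?thesis .
  next
    case False then show ?thesis by (simp add: gmult_def)
  qed
qed

lemma gmult_scal:
  "gmult (\<lambda>U. c * f U) (\<lambda>U. e * g U) = (\<lambda>U. c * e * gmult f g U)"
  by (rule ext) (simp add: gmult_def sum_distrib_left mult_ac)

lemma gmult_scal2:
  "gmult f (\<lambda>U. e * g U) = (\<lambda>U. e * gmult f g U)"
  using gmult_scal[of 1 f e g] by simp

lemma comb_sum:
  fixes h :: "nat set \<Rightarrow> 'a::comm_semiring_1"
  assumes B: "finite B"
  shows "(\<Sum>b\<in>B. \<Sum>J\<in>{J. J \<subseteq> B \<and> card J = n}. (if b \<notin> J then h (insert b J) else 0))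
       = (\<Sum>J\<in>{J. J \<subseteq> B \<and> card J = Suc n}. of_nat (Suc n) * h J)"
proof -
  have fC: "finite {J. J \<subseteq> B \<and> card J = m}" for m using B by simp
  have "(\<Sum>b\<in>B. \<Sum>J\<in>{J. J \<subseteq> B \<and> card J = n}. (if b \<notin> J then h (insert b J) else 0))
      = (\<Sum>b\<in>B. \<Sum>J\<in>{J. J \<subseteq> B \<and> card J = n \<and> b \<notin> J}. h (insert b J))"
  proof (rule sum.cong[OF refl])
    fix b assume "b \<in> B"
    have "(\<Sum>J\<in>{J. J \<subseteq> B \<and> card J = n}. (if b \<notin> J then h (insert b J) else 0))
       = (\<Sum>J\<in>{J. J \<subseteq> B \<and> card J = n} \<inter> {J. b \<notin> J}. h (insert b J))"
      by (simp add: sum.inter_restrict[OF fC])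
    also have "{J. J \<subseteq> B \<and> card J = n} \<inter> {J. b \<notin> J} = {J. J \<subseteq> B \<and> card J = n \<and> b \<notin> J}" by blast
    finally show "(\<Sum>J\<in>{J. J \<subseteq> B \<and> card J = n}. (if b \<notin> J then h (insert b J) else 0))
       = (\<Sum>J\<in>{J. J \<subseteq> B \<and> card J = n \<and> b \<notin> J}. h (insert b J))" .
  qed
  also have "\<dots> = (\<Sum>p\<in>(SIGMA b:B. {J. J \<subseteq> B \<and> card J = n \<and> b \<notin> J}). h (insert (fst p) (snd p)))"
    using B by (subst sum.Sigma) (auto simp: fC case_prod_unfold)
  also have "\<dots> = (\<Sum>q\<in>(SIGMA J:{J. J \<subseteq> B \<and> card J = Suc n}. J). h (fst q))"
    apply (rule sum.reindex_bij_witness[where i = "\<lambda>q. (snd q, fst q - {snd q})" and j = "\<lambda>p. (insert (fst p) (snd p), fst p)"])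
    subgoal by auto
    subgoal for p using B by (auto dest: finite_subset[OF _ B])
    subgoal for q by (auto simp: insert_absorb)
    subgoal for q using B by (auto dest: finite_subset[OF _ B])
    subgoal by simp
    done
  also have "\<dots> = (\<Sum>J\<in>{J. J \<subseteq> B \<and> card J = Suc n}. \<Sum>b\<in>J. h J)"
    using B by (subst sum.Sigma) (auto simp: fC case_prod_unfold intro: finite_subset)
  also have "\<dots> = (\<Sum>J\<in>{J. J \<subseteq> B \<and> card J = Suc n}. of_nat (Suc n) * h J)"
    by (intro sum.cong refl) (simp add: of_nat_mult[symmetric])
  finally show ?thesis .
qed



lemma gone_gM: "gone = gM d k N {}"
  by (rule ext) (simp add: gone_def gM_def blks_def)

lemma gpow_sum:
  assumes g: "good d k N" and B: "B \<subseteq> {..<N}"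
  shows "gpow (\<lambda>U. \<Sum>b\<in>B. gM d k N {b} U) n
       = (\<lambda>U. (of_nat (fact n) :: 'a::field) * (\<Sum>J\<in>{J. J \<subseteq> B \<and> card J = n}. gM d k N J U))"
proof (induction n)
  case 0
  have fB: "finite B" using B finite_subset by blast
  have "{J. J \<subseteq> B \<and> card J = 0} = {{}}" using fB by (auto dest: finite_subset)
  then show ?case by (simp add: gone_gM)
next
  case (Suc n)
  have fB: "finite B" using B finite_subset by blast
  define C where "C = {J. J \<subseteq> B \<and> card J = n}"
  have fC: "finite C" using fB by (simp add: C_def)
  define c :: 'a where "c = of_nat (fact n)"
  have "gpow (\<lambda>U. \<Sum>b\<in>B. gM d k N {b} U) (Suc n)
      = gmult (\<lambda>U. \<Sum>b\<in>B. gM d k N {b} U) (\<lambda>U. \<Sum>J\<in>C. (\<lambda>J U. c * gM d k N J U) J U)"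
    using Suc.IH by (simp add: sum_distrib_left C_def c_def)
  also have "\<dots> = (\<lambda>U. \<Sum>b\<in>B. \<Sum>J\<in>C. gmult (gM d k N {b}) (\<lambda>U. c * gM d k N J U) U)"
    by (rule gmult_sum[OF fB fC])
  also have "\<dots> = (\<lambda>U. \<Sum>b\<in>B. \<Sum>J\<in>C. c * (if b \<notin> J then gM d k N (insert b J) U else 0))"
  proof (intro ext sum.cong refl)
    fix U b J assume b: "b \<in> B" and J: "J \<in> C"
    have "{b} \<subseteq> {..<N}" "J \<subseteq> {..<N}" using b J B by (auto simp: C_def)
    then show "gmult (gM d k N {b}) (\<lambda>U. c * gM d k N J U) U = c * (if b \<notin> J then gM d k N (insert b J) U else 0)"
      by (simp add: gmult_scal2 gmult_gM[OF g])
  qed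
  also have "\<dots> = (\<lambda>U. c * (\<Sum>b\<in>B. \<Sum>J\<in>C. (if b \<notin> J then gM d k N (insert b J) U else 0)))"
    by (simp add: sum_distrib_left)
  also have "\<dots> = (\<lambda>U. c * (\<Sum>J\<in>{J. J \<subseteq> B \<and> card J = Suc n}. of_nat (Suc n) * gM d k N J U))"
    unfolding C_def by (subst comb_sum[OF fB]) (rule refl)
  also have "\<dots> = (\<lambda>U. of_nat (fact (Suc n)) * (\<Sum>J\<in>{J. J \<subseteq> B \<and> card J = Suc n}. gM d k N J U))"
    by (simp add: c_def sum_distrib_left algebra_simps)
  finally show ?case .
qed

lemma gpow_full:
  assumes g: "good d k N" and B: "B \<subseteq> {..<N}"
  shows "gpow (\<lambda>U. \<Sum>b\<in>B. gM d k N {b} U) (card B)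
       = (\<lambda>U. (of_nat (fact (card B)) :: 'a::field) * gM d k N B U)"
proof -
  have fB: "finite B" using B finite_subset by blast
  have "{J. J \<subseteq> B \<and> card J = card B} = {B}" using fB card_subset_eq[OF fB] by auto
  then show ?thesis using gpow_sum[OF g B, of "card B"] by simp
qed



lemma distinct_concat_map:
  assumes "distinct xs" "\<And>x. x \<in> set xs \<Longrightarrow> distinct (g x)"
    "\<And>x y. x \<in> set xs \<Longrightarrow> y \<in> set xs \<Longrightarrow> x \<noteq> y \<Longrightarrow> set (g x) \<inter> set (g y) = {}"
  shows "distinct (concat (map g xs))"
  using assms
proof (induction xs)
  case Nil then show ?case by simp
next
  case (Cons a xs)
  have "set (g a) \<inter> set (concat (map g xs)) = {}"
    using Cons.prems by fastforce
  then show ?case using Cons by auto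
qed

lemma mv_set: "set (mon_vars k l) = {(i, t). 1 \<le> i \<and> i \<le> k \<and> 1 \<le> t \<and> t \<le> l i}"
  by (auto simp: mon_vars_def image_iff less_Suc_eq_le)

lemma mv_distinct: "distinct (mon_vars k l)"
  unfolding mon_vars_def
  by (rule distinct_concat_map) (auto simp: distinct_map inj_on_def)

lemma sum_fst_concat:
  "sum_list (map fst (concat (map (\<lambda>v. replicate (rr v) v) ws))) = sum_list (map (\<lambda>v. rr v * fst v) (ws :: (nat \<times> nat) list))"
  by (induction ws) (auto simp: sum_list_replicate)

lemma len_filter_concat:
  "distinct ws \<Longrightarrow> length (filter (\<lambda>w. w = v) (concat (map (\<lambda>v. replicate (rr v) v) ws)))
     = (if v \<in> set ws then rr v else 0)"
  by (induction ws) (auto simp: filter_replicate)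

lemma set_concat_rep: "set (concat (map (\<lambda>v. replicate (rr v) v) ws)) \<subseteq> set ws"
  by auto

lemma fact_nz:
  assumes "m < CHAR('a::field)"
  shows "(of_nat (fact m) :: 'a) \<noteq> 0"
  using assms
proof (induction m)
  case 0 then show ?case by simp
next
  case (Suc m)
  have "\<not> CHAR('a) dvd Suc m" using Suc.prems by (auto dest: dvd_imp_le)
  then have "(of_nat (Suc m) :: 'a) \<noteq> 0" by (metis of_nat_eq_0_iff_char_dvd)
  moreover have "(of_nat (fact m) :: 'a) \<noteq> 0" using Suc by simp
  ultimately show ?case by (simp only: fact_Suc of_nat_mult) simp
qed

lemma sum_gM_nz:
  assumes "(\<Sum>b\<in>B. gM d k N {b} S) \<noteq> (0::'a::field)"
  shows "\<exists>b\<in>B. S = blk d k N b"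
proof (rule ccontr)
  assume "\<not> ?thesis"
  then have "(\<Sum>b\<in>B. gM d k N {b} S) = (0::'a)"
    by (intro sum.neutral) (auto simp: gM_def blks_def)
  then show False using assms by simp
qed


theorem mainTheorem7:
  fixes k :: nat and l :: "nat \<Rightarrow> nat" and r :: "nat \<Rightarrow> nat \<Rightarrow> nat" and p :: nat
  assumes "infinite (UNIV :: 'a::field set)"
    and "CHAR('a) = p" and "p > 2"
    and "k > 0"
    and "(\<Sum>i=1..k. i * (\<Sum>t=1..l i. r i t)) \<le> k"
    and "\<forall>i\<in>{1..k}. \<forall>t\<in>{1..l i}. r i t < p"
  shows "\<not> graded_identity_mon TYPE('a) k l r"
proof
  assume gi: "graded_identity_mon TYPE('a) k l r"
  define vs where "vs = mon_vars k l"
  define rr where "rr = (\<lambda>v::nat \<times> nat. r (fst v) (snd v))"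
  define L where "L = concat (map (\<lambda>v. replicate (rr v) v) vs)"
  define N where "N = length L"
  define d where "d = (\<lambda>b. fst (L ! b))"
  define Bv where "Bv = (\<lambda>v. {b. b < N \<and> L ! b = v})"
  define \<phi> :: "nat \<Rightarrow> nat \<Rightarrow> nat set \<Rightarrow> 'a" where "\<phi> = (\<lambda>i t U. \<Sum>b\<in>Bv (i, t). gM d k N {b} U)"
  have dvs: "distinct vs" using mv_distinct vs_def by simp
  have Lset: "L ! b \<in> set vs" if "b < N" for b
    using that set_concat_rep[of rr vs] nth_mem[of b L] unfolding N_def L_def by blast
  have svs: "set vs = Sigma {1..k} (\<lambda>i. {1..l i})" by (auto simp: vs_def mv_set)
  have sumd: "(\<Sum>b<N. d b) = (\<Sum>i=1..k. i * (\<Sum>t=1..l i. r i t))"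
  proof -
    have "(\<Sum>b<N. d b) = sum_list (map fst L)"
      by (simp add: sum_list_sum_nth d_def N_def atLeast0LessThan)
    also have "\<dots> = sum_list (map (\<lambda>v. rr v * fst v) vs)" by (simp add: L_def sum_fst_concat)
    also have "\<dots> = sum (\<lambda>v. rr v * fst v) (set vs)" by (rule sum_list_distinct_conv_sum_set[OF dvs])
    also have "\<dots> = (\<Sum>i=1..k. \<Sum>t=1..l i. rr (i, t) * i)"
      unfolding svs by (subst sum.Sigma) (simp_all add: case_prod_unfold)
    also have "\<dots> = (\<Sum>i=1..k. i * (\<Sum>t=1..l i. r i t))"
      by (simp add: rr_def sum_distrib_left mult.commute)
    finally show ?thesis .
  qed
  have g: "good d k N" unfolding good_def
  proof (intro conjI allI impI)
    fix b assume "b < N"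
    then show "1 \<le> d b" using Lset[of b] by (auto simp: d_def svs)
  next
    show "(\<Sum>b<N. d b) \<le> k" using sumd assms(5) by simp
  qed
  have cardBv: "card (Bv v) = rr v" if "v \<in> set vs" for v
  proof -
    have "card (Bv v) = length (filter (\<lambda>w. w = v) L)"
      by (simp add: length_filter_conv_card Bv_def N_def)
    also have "\<dots> = rr v" using len_filter_concat[OF dvs, of v rr] that by (simp add: L_def)
    finally show ?thesis .
  qed
  have Bsub: "Bv v \<subseteq> {..<N}" for v by (auto simp: Bv_def)
  have Bdisj: "Bv v \<inter> Bv w = {}" if "v \<noteq> w" for v w using that by (auto simp: Bv_def)
  have powv: "gpow (\<phi> i t) (r i t) = (\<lambda>U. of_nat (fact (rr (i, t))) * gM d k N (Bv (i, t)) U)"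
    if "(i, t) \<in> set vs" for i t
  proof -
    have "r i t = card (Bv (i, t))" using cardBv[OF that] by (simp add: rr_def)
    then show ?thesis unfolding \<phi>_def using gpow_full[OF g Bsub, of "(i, t)"] cardBv[OF that] by simp
  qed
  define F where "F = (\<lambda>(i, t) acc. gmult (gpow (\<phi> i t) (r i t)) acc)"
  have fold: "foldr F ws gone = (\<lambda>U. of_nat (\<Prod>w\<in>set ws. fact (rr w)) * gM d k N (\<Union>w\<in>set ws. Bv w) U)"
    if "distinct ws" "set ws \<subseteq> set vs" for ws
    using that
  proof (induction ws)
    case Nil
    then show ?case by (simp add: gone_gM)
  next
    case (Cons w ws)
    obtain i t where w: "w = (i, t)" by (cases w)
    have wv: "(i, t) \<in> set vs" using Cons.prems w by simp
    have dj: "Bv w \<inter> (\<Union>w\<in>set ws. Bv w) = {}" using Cons.prems by (auto simp: Bv_def)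
    have sub2: "(\<Union>w\<in>set ws. Bv w) \<subseteq> {..<N}" by (rule UN_least) (rule Bsub)
    have "foldr F (w # ws) gone = gmult (\<lambda>U. of_nat (fact (rr w)) * gM d k N (Bv w) U)
        (\<lambda>U. of_nat (\<Prod>w\<in>set ws. fact (rr w)) * gM d k N (\<Union>w\<in>set ws. Bv w) U)"
      using Cons powv[OF wv] w by (simp add: F_def)
    also have "\<dots> = (\<lambda>U. of_nat (fact (rr w)) * of_nat (\<Prod>w\<in>set ws. fact (rr w)) * gM d k N (Bv w \<union> (\<Union>w\<in>set ws. Bv w)) U)"
      by (simp add: gmult_scal gmult_gM[OF g Bsub sub2] dj)
    also have "\<dots> = (\<lambda>U. of_nat (\<Prod>w\<in>set (w # ws). fact (rr w)) * gM d k N (\<Union>w\<in>set (w # ws). Bv w) U)"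
      using Cons.prems by simp
    finally show ?case .
  qed
  have phi_in: "\<forall>i\<in>{1..k}. \<forall>t\<in>{1..l i}. \<phi> i t \<in> gcomp k (int i)"
  proof (intro ballI)
    fix i t assume i: "i \<in> {1..k}" and t: "t \<in> {1..l i}"
    have nz: "\<exists>b\<in>Bv (i, t). S = blk d k N b" if "\<phi> i t S \<noteq> 0" for S
      using sum_gM_nz[where B="Bv (i, t)" and d=d and k=k and N=N and S=S] that by (simp add: \<phi>_def)
    have finB: "finite (Bv (i, t))" by (rule finite_subset[OF Bsub]) simp
    have "{S. \<phi> i t S \<noteq> 0} \<subseteq> blk d k N ` Bv (i, t)" using nz by blast
    then have fin: "finite {S. \<phi> i t S \<noteq> 0}" by (rule finite_subset) (rule finite_imageI[OF finB])
    have props: "finite S \<and> 0 \<notin> S \<and> int (card (S \<inter> {1..k})) = int i" if nzS: "\<phi> i t S \<noteq> 0" for S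
    proof -
      obtain b where b: "b \<in> Bv (i, t)" "S = blk d k N b" using nz[OF nzS] by blast
      have bN: "b < N" and Lb: "L ! b = (i, t)" using b by (auto simp: Bv_def)
      have db: "d b = i" using Lb by (simp add: d_def)
      have "0 \<notin> blk d k N b"
        using pset_le[OF g bN] qset_gt[OF bN, where d=d and k=k] unfolding blk_def by fastforce
      moreover have "blk d k N b \<inter> {1..k} = pset d b"
        using pset_le[OF g bN] qset_gt[OF bN, where d=d and k=k] unfolding blk_def by fastforce
      ultimately show ?thesis using b db finite_blk by (simp add: pset_def)
    qed
    show "\<phi> i t \<in> gcomp k (int i)"
      unfolding gcomp_def grassmann_elem_def using fin props by simp
  qed
  have ev: "eval_mon k l r \<phi> = (\<lambda>_. 0)" using gi phi_in unfolding graded_identity_mon_def by blast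
  have "eval_mon k l r \<phi> = (\<lambda>U. of_nat (\<Prod>w\<in>set vs. fact (rr w)) * gM d k N (\<Union>w\<in>set vs. Bv w) U)"
    unfolding eval_mon_def vs_def[symmetric] F_def[symmetric] using fold[OF dvs] by simp
  then have "(of_nat (\<Prod>w\<in>set vs. fact (rr w)) :: 'a) = 0"
    using ev fun_cong[OF ev, of "blks d k N (\<Union>w\<in>set vs. Bv w)"] by (simp add: gM_def)
  moreover have "(of_nat (\<Prod>w\<in>set vs. fact (rr w)) :: 'a) \<noteq> 0"
  proof -
    have "\<forall>w\<in>set vs. (of_nat (fact (rr w)) :: 'a) \<noteq> 0"
    proof
      fix w assume "w \<in> set vs"
      then have "rr w < CHAR('a)" using assms(2,6) by (auto simp: svs rr_def)
      then show "(of_nat (fact (rr w)) :: 'a) \<noteq> 0" by (rule fact_nz)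
    qed
    then show ?thesis by (simp add: of_nat_prod)
  qed
  ultimately show False by simp
qed


end
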